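(* Let $k$ be a finite field of odd characteristic and $b:V\times V\to W$ a non-degenerate Hermitian $k$-bilinear map which is $\perp$-indecomposable. Then for every $x\in\operatorname{Adj}(b)$ the element $x+x^*$ is either invertible or nilpotent. In particular every $x\in\operatorname{Sym}(b)$ is invertible or nilpotent.
   Context: $b$ is Hermitian if $W=b(V,V)$ and $b(u,v)=b(v,u)\theta$ for some $\theta\in\mathrm{GL}(W)$; non-degenerate if $b(u,V)=0=b(V,u)$ implies $u=0$. $\operatorname{Adj}(b)$ is the set of $f\in\operatorname{End}V$ with an (unique) adjoint $f^*\in\operatorname{End}V$ satisfying $b(uf,v)=b(u,vf^* )$ for all $u,v$; $\operatorname{Sym}(b)=\{f\in\operatorname{End}V: b(uf,v)=b(u,vf)\ \forall u,v\}$. $b$ is $\perp$-indecomposable if there is no set $\mathcal{X}\neq\{V\}$ of subspaces, pairwise $b$-orthogonal, generating $V$ with no proper subset generating $V$. *)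

theory Defs
  imports Complex_Main
begin

text \<open>V is a k-vector space given by a type 'v with scalar multiplication sV,
 W likewise ('w, sW). Endomorphisms act as functions; the paper's right action
 u f is written f u.\<close>

definition k_bilinear ::
  "('k::field \<Rightarrow> 'v::ab_group_add \<Rightarrow> 'v) \<Rightarrow> ('k \<Rightarrow> 'w::ab_group_add \<Rightarrow> 'w)
   \<Rightarrow> ('v \<Rightarrow> 'v \<Rightarrow> 'w) \<Rightarrow> bool" where
  "k_bilinear sV sW b \<longleftrightarrow>
     (\<forall>u. Vector_Spaces.linear sV sW (\<lambda>v. b u v)) \<and>
     (\<forall>v. Vector_Spaces.linear sV sW (\<lambda>u. b u v))"

definition hermitian ::
  "('k::field \<Rightarrow> 'v::ab_group_add \<Rightarrow> 'v) \<Rightarrow> ('k \<Rightarrow> 'w::ab_group_add \<Rightarrow> 'w)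
   \<Rightarrow> ('v \<Rightarrow> 'v \<Rightarrow> 'w) \<Rightarrow> bool" where
  "hermitian sV sW b \<longleftrightarrow>
     module.span sW {b u v | u v. True} = UNIV \<and>
     (\<exists>\<theta>. Vector_Spaces.linear sW sW \<theta> \<and> bij \<theta> \<and> (\<forall>u v. b u v = \<theta> (b v u)))"

definition nondegenerate :: "('v::zero \<Rightarrow> 'v \<Rightarrow> 'w::zero) \<Rightarrow> bool" where
  "nondegenerate b \<longleftrightarrow> (\<forall>u. (\<forall>v. b u v = 0) \<and> (\<forall>v. b v u = 0) \<longrightarrow> u = 0)"

definition b_orthogonal :: "('v \<Rightarrow> 'v \<Rightarrow> 'w::zero) \<Rightarrow> 'v set \<Rightarrow> 'v set \<Rightarrow> bool" where
  "b_orthogonal b X Y \<longleftrightarrow> (\<forall>x\<in>X. \<forall>y\<in>Y. b x y = 0 \<and> b y x = 0)"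

definition perp_indecomposable ::
  "('k::field \<Rightarrow> 'v::ab_group_add \<Rightarrow> 'v) \<Rightarrow> ('v \<Rightarrow> 'v \<Rightarrow> 'w::zero) \<Rightarrow> bool" where
  "perp_indecomposable sV b \<longleftrightarrow>
     \<not> (\<exists>XX :: 'v set set.
          XX \<noteq> {UNIV} \<and>
          (\<forall>X\<in>XX. module.subspace sV X) \<and>
          (\<forall>X\<in>XX. \<forall>Y\<in>XX. X \<noteq> Y \<longrightarrow> b_orthogonal b X Y) \<and>
          module.span sV (\<Union>XX) = UNIV \<and>
          (\<forall>YY. YY \<subset> XX \<longrightarrow> module.span sV (\<Union>YY) \<noteq> UNIV))"

definition is_adjoint ::
  "('k::field \<Rightarrow> 'v::ab_group_add \<Rightarrow> 'v) \<Rightarrow> ('v \<Rightarrow> 'v \<Rightarrow> 'w) \<Rightarrow> ('v \<Rightarrow> 'v) \<Rightarrow> ('v \<Rightarrow> 'v) \<Rightarrow> bool" where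
  "is_adjoint sV b f g \<longleftrightarrow> Vector_Spaces.linear sV sV g \<and> (\<forall>u v. b (f u) v = b u (g v))"

definition Adj ::
  "('k::field \<Rightarrow> 'v::ab_group_add \<Rightarrow> 'v) \<Rightarrow> ('v \<Rightarrow> 'v \<Rightarrow> 'w) \<Rightarrow> ('v \<Rightarrow> 'v) set" where
  "Adj sV b = {f. Vector_Spaces.linear sV sV f \<and> (\<exists>g. is_adjoint sV b f g)}"

definition adjoint ::
  "('k::field \<Rightarrow> 'v::ab_group_add \<Rightarrow> 'v) \<Rightarrow> ('v \<Rightarrow> 'v \<Rightarrow> 'w) \<Rightarrow> ('v \<Rightarrow> 'v) \<Rightarrow> ('v \<Rightarrow> 'v)" where
  "adjoint sV b f = (THE g. is_adjoint sV b f g)"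

definition Sym ::
  "('k::field \<Rightarrow> 'v::ab_group_add \<Rightarrow> 'v) \<Rightarrow> ('v \<Rightarrow> 'v \<Rightarrow> 'w) \<Rightarrow> ('v \<Rightarrow> 'v) set" where
  "Sym sV b = {f. Vector_Spaces.linear sV sV f \<and> (\<forall>u v. b (f u) v = b u (f v))}"

definition invertible_or_nilpotent :: "('v \<Rightarrow> 'v::zero) \<Rightarrow> bool" where
  "invertible_or_nilpotent f \<longleftrightarrow> bij f \<or> (\<exists>n. (f ^^ n) = (\<lambda>_. 0))"

end

theory Submission
  imports Defs
begin

lemma fin_funs:
  assumes "finite (UNIV :: 'a set)"
  shows "finite (UNIV :: ('a \<Rightarrow> 'a) set)"
proof (rule finite_imageD)
  let ?graph = "\<lambda>f::'a \<Rightarrow> 'a. {(x, y). y = f x}"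
  have "range ?graph \<subseteq> Pow UNIV" by simp
  moreover have "finite (Pow (UNIV :: ('a * 'a) set))"
    using assms by (simp add: finite_cartesian_product flip: UNIV_Times_UNIV)
  ultimately show "finite (range ?graph)" by (rule finite_subset)
  show "inj ?graph" by (rule inj_onI) (auto simp add: set_eq_iff fun_eq_iff)
qed

lemma funpow_period:
  fixes s :: "'a \<Rightarrow> 'a"
  assumes "s ^^ m = s ^^ (m + p)" and "n \<ge> m"
  shows "s ^^ (n + q * p) = s ^^ n"
proof (induction q)
  case 0 then show ?case by simp
next
  case (Suc q)
  have "s ^^ ((n + q*p - m) + (m + p)) = s ^^ (n + q*p - m) \<circ> s ^^ (m+p)"
    by (rule funpow_add)
  also have "\<dots> = s ^^ (n + q*p - m) \<circ> s ^^ m" using assms(1) by simp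
  also have "\<dots> = s ^^ (n + q*p - m + m)" by (simp add: funpow_add)
  finally show ?case using Suc assms(2) by (simp add: algebra_simps)
qed

lemma main:
  fixes sV :: "'k::field \<Rightarrow> 'v::ab_group_add \<Rightarrow> 'v" and b :: "'v \<Rightarrow> 'v \<Rightarrow> 'w::zero"
    and s :: "'v \<Rightarrow> 'v"
  assumes vs: "vector_space sV" and fin: "finite (UNIV :: 'v set)"
    and add: "\<And>a c. s (a + c) = s a + s c"
    and scl: "\<And>c a. s (sV c a) = sV c (s a)"
    and sa: "\<And>u v. b (s u) v = b u (s v)"
    and b0: "\<And>u. b u 0 = 0" "\<And>u. b 0 u = 0"
    and pi: "perp_indecomposable sV b"
  shows "invertible_or_nilpotent s"
proof -
  interpret vector_space sV by (rule vs)
  have "\<not> inj (\<lambda>n::nat. s ^^ n)"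
  proof
    assume "inj (\<lambda>n::nat. s ^^ n)"
    then have "finite (UNIV :: nat set)"
      using finite_subset[OF subset_UNIV fin_funs[OF fin]] finite_imageD by blast
    then show False by simp
  qed
  then obtain m n where mn: "m \<noteq> n" "s ^^ m = s ^^ n" unfolding inj_def by blast
  obtain m p where mp: "p > 0" "s ^^ m = s ^^ (m + p)"
  proof (cases "m < n")
    case True then show ?thesis using that[of "n - m" m] mn by simp
  next
    case False then show ?thesis using that[of "m - n" n] mn by simp
  qed
  define N where "N = (m+1)*p"
  define f where "f = s ^^ N"
  have Nge: "(m+1)*1 \<le> (m+1)*p" using mp(1) by (intro mult_le_mono2) simp
  have N1: "N \<ge> 1" "N \<ge> m" using Nge unfolding N_def by simp_all
  have ff: "f (f v) = f v" for v
  proof -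
    have "s ^^ (N + (m+1)*p) = s ^^ N" by (rule funpow_period[OF mp(2) N1(2)])
    then have "s ^^ (N + N) = s ^^ N" unfolding N_def .
    then show ?thesis unfolding f_def funpow_add by (metis comp_apply)
  qed
  have fadd: "(s ^^ k) (a + c) = (s ^^ k) a + (s ^^ k) c" for k a c
    by (induction k arbitrary: a c) (simp_all add: add)
  have fscl: "(s ^^ k) (sV c a) = sV c ((s ^^ k) a)" for k c a
    by (induction k arbitrary: a) (simp_all add: scl)
  have fsa: "b ((s ^^ k) u) v = b u ((s ^^ k) v)" for k u v
    by (induction k arbitrary: u v) (simp_all add: sa funpow_swap1)
  have f0: "f 0 = 0" using fadd[of N 0 0] unfolding f_def by simp
  have fminus: "f (a - c) = f a - f c" for a c
    using fadd[of N "a - c" c] unfolding f_def by (simp add: algebra_simps)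
  define K where "K = {v. f v = 0}"
  define R where "R = range f"
  have subK: "subspace K"
  proof (rule subspaceI)
    show "0 \<in> K" using f0 unfolding K_def by simp
    show "x + y \<in> K" if "x \<in> K" "y \<in> K" for x y
      using that fadd[of N x y] unfolding K_def f_def by simp
    show "sV c x \<in> K" if "x \<in> K" for c x
      using that fscl[of N c x] unfolding K_def f_def by simp
  qed
  have subR: "subspace R" unfolding R_def subspace_def
  proof (intro conjI ballI allI)
    show "0 \<in> range f" using f0 by (metis rangeI)
    fix x y assume "x \<in> range f" "y \<in> range f"
    then obtain a c where "x = f a" "y = f c" by blast
    then show "x + y \<in> range f" using fadd[of N a c] unfolding f_def by (metis rangeI)
  next
    fix c x assume "x \<in> range f"
    then obtain a where "x = f a" by blast
    then show "sV c x \<in> range f" using fscl[of N c a] unfolding f_def by (metis rangeI)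
  qed
  have decomp: "v - f v \<in> K" "f v \<in> R" for v
    unfolding K_def R_def using fminus ff by auto
  have inter: "x \<in> K \<Longrightarrow> x \<in> R \<Longrightarrow> x = 0" for x
    unfolding K_def R_def using ff by auto
  show ?thesis
  proof (cases "K = UNIV")
    case True
    then have "s ^^ N = (\<lambda>_. 0)" unfolding K_def f_def by auto
    then show ?thesis unfolding invertible_or_nilpotent_def by blast
  next
    case Knot: False
    show ?thesis
    proof (cases "R = UNIV")
      case True
      then have "f v = v" for v using ff unfolding R_def by (metis rangeE UNIV_I)
      then have fid: "s ^^ N = id" unfolding f_def by auto
      obtain M where M: "N = Suc M" using N1(1) by (cases N) auto
      have h1: "s ^^ M \<circ> s = id"
        using fid unfolding M by (simp add: funpow_Suc_right del: funpow.simps)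
      have h2: "s \<circ> s ^^ M = id"
        using fid unfolding M by simp
      have "bij s" by (rule o_bij[OF h1 h2])
      then show ?thesis unfolding invertible_or_nilpotent_def by blast
    next
      case Rnot: False
      have Kne: "K \<noteq> {0}"
      proof
        assume "K = {0}"
        then have "v = f v" for v using decomp(1)[of v] by auto
        then have "R = UNIV" unfolding R_def by (metis surj_def)
        then show False using Rnot by simp
      qed
      have Rne: "R \<noteq> {0}"
      proof
        assume "R = {0}"
        then have "f v = 0" for v using decomp(2)[of v] by auto
        then have "K = UNIV" unfolding K_def by auto
        then show False using Knot by simp
      qed
      have KR: "K \<noteq> R" using inter Kne subK subspace_0 by blast
      have orth: "b_orthogonal b K R" "b_orthogonal b R K"
        unfolding b_orthogonal_def K_def R_def
      proof (safe)
        fix x a assume "f x = 0"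
        show "b x (f a) = 0" using fsa[of N x a] b0 unfolding f_def by (metis \<open>f x = 0\<close>[unfolded f_def])
        show "b (f a) x = 0" using fsa[of N a x] b0 unfolding f_def by (metis \<open>f x = 0\<close>[unfolded f_def])
        show "b (f a) x = 0" using fsa[of N a x] b0 unfolding f_def by (metis \<open>f x = 0\<close>[unfolded f_def])
        show "b x (f a) = 0" using fsa[of N x a] b0 unfolding f_def by (metis \<open>f x = 0\<close>[unfolded f_def])
      qed
      have spanUN: "span (\<Union>{K, R}) = UNIV"
      proof (rule set_eqI, simp)
        fix v
        have "(v - f v) + f v \<in> span (K \<union> R)"
          using decomp[of v] by (meson UnI1 UnI2 span_add span_base)
        then show "v \<in> span (K \<union> R)" by simp
      qed
      have "\<exists>XX :: 'v set set.
          XX \<noteq> {UNIV} \<and>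
          (\<forall>X\<in>XX. module.subspace sV X) \<and>
          (\<forall>X\<in>XX. \<forall>Y\<in>XX. X \<noteq> Y \<longrightarrow> b_orthogonal b X Y) \<and>
          module.span sV (\<Union>XX) = UNIV \<and>
          (\<forall>YY. YY \<subset> XX \<longrightarrow> module.span sV (\<Union>YY) \<noteq> UNIV)"
      proof (intro exI[of _ "{K, R}"] conjI ballI allI impI)
        show "{K, R} \<noteq> {UNIV}" using Knot by auto
        show "\<And>X. X \<in> {K, R} \<Longrightarrow> subspace X" using subK subR by auto
        show "\<And>X Y. X \<in> {K, R} \<Longrightarrow> Y \<in> {K, R} \<Longrightarrow> X \<noteq> Y \<Longrightarrow> b_orthogonal b X Y"
          using orth by auto
        show "span (\<Union>{K, R}) = UNIV" by (rule spanUN)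
        fix YY assume YY: "YY \<subset> {K, R}"
        then have "YY = {} \<or> YY = {K} \<or> YY = {R}" by auto
        then show "span (\<Union>YY) \<noteq> UNIV"
        proof (elim disjE)
          assume "YY = {}"
          have "UNIV \<noteq> ({0} :: 'v set)" using Kne subK subspace_0 by blast
          then show ?thesis using \<open>YY = {}\<close> by simp
        next
          assume "YY = {K}"
          have "span K = K" using subK by (simp only: span_eq_iff)
          then show ?thesis using \<open>YY = {K}\<close> Knot by (simp del: span_eq_iff)
        next
          assume "YY = {R}"
          have "span R = R" using subR by (simp only: span_eq_iff)
          then show ?thesis using \<open>YY = {R}\<close> Rnot by (simp del: span_eq_iff)
        qed
      qed
      then show ?thesis using pi unfolding perp_indecomposable_def by blast
    qed
  qed
qed


theorem lemma4p33:
  fixes sV :: "'k::field \<Rightarrow> 'v::ab_group_add \<Rightarrow> 'v"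
    and sW :: "'k \<Rightarrow> 'w::ab_group_add \<Rightarrow> 'w"
    and b :: "'v \<Rightarrow> 'v \<Rightarrow> 'w"
  assumes "finite (UNIV :: 'k set)"
    and "odd CHAR('k)"
    and "vector_space sV" and "vector_space sW"
    and "finite (UNIV :: 'v set)"
    and "k_bilinear sV sW b"
    and "hermitian sV sW b"
    and "nondegenerate b"
    and "perp_indecomposable sV b"
  shows "(\<forall>x\<in>Adj sV b. invertible_or_nilpotent (\<lambda>v. x v + adjoint sV b x v))
       \<and> (\<forall>x\<in>Sym sV b. invertible_or_nilpotent x)"
proof -
  note vs = assms(3) and fin = assms(5)
  interpret vector_space sV by (rule vs)
  from assms(6) have linR: "\<And>u. Vector_Spaces.linear sV sW (\<lambda>v. b u v)"
    and linL: "\<And>v. Vector_Spaces.linear sV sW (\<lambda>u. b u v)"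
    unfolding k_bilinear_def by auto
  have bR: "b u (a + c) = b u a + b u c" for u a c using linR[of u] unfolding Vector_Spaces.linear_iff by blast
  have bL: "b (a + c) v = b a v + b c v" for v a c using linL[of v] unfolding Vector_Spaces.linear_iff by blast
  have bR0: "b u 0 = 0" for u using bR[of u 0 0] by simp
  have bL0: "b 0 u = 0" for u using bL[of 0 0 u] by simp
  from assms(7) obtain \<theta> where th: "Vector_Spaces.linear sW sW \<theta>" "\<And>u v. b u v = \<theta> (b v u)"
    unfolding hermitian_def by blast
  have thadd: "\<theta> (a + c) = \<theta> a + \<theta> c" for a c using th(1) unfolding Vector_Spaces.linear_iff by blast
  have th0: "\<theta> 0 = 0" using thadd[of 0 0] by simp
  have A: "invertible_or_nilpotent (\<lambda>v. x v + adjoint sV b x v)" if xA: "x \<in> Adj sV b" for x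
  proof -
    from xA obtain g where lx: "Vector_Spaces.linear sV sV x" and g: "is_adjoint sV b x g"
      unfolding Adj_def by blast
    have lg: "Vector_Spaces.linear sV sV g" and gb: "\<And>u v. b (x u) v = b u (g v)"
      using g unfolding is_adjoint_def by auto
    have uniq: "g' = g" if "is_adjoint sV b x g'" for g'
    proof
      fix v
      have gb': "\<And>u v. b (x u) v = b u (g' v)" using that unfolding is_adjoint_def by auto
      define w where "w = g' v - g v"
      have bw: "b u w = 0" for u
      proof -
        have "b u (w + g v) = b u w + b u (g v)" by (rule bR)
        moreover have "w + g v = g' v" unfolding w_def by simp
        ultimately have "b u (g' v) = b u w + b u (g v)" by simp
        then show ?thesis using gb[of u v] gb'[of u v] by simp
      qed
      have bw2: "b w u = 0" for u
        using bw[of u] th(2)[of w u] th0 by simp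
      have "w = 0" using assms(8) bw bw2 unfolding nondegenerate_def by blast
      then show "g' v = g v" unfolding w_def by simp
    qed
    have adj: "adjoint sV b x = g" unfolding adjoint_def
      using g uniq by (rule the_equality)
    have xadd: "x (a + c) = x a + x c" "x (sV k a) = sV k (x a)" for a c k
      using lx unfolding Vector_Spaces.linear_iff by blast+
    have gadd: "g (a + c) = g a + g c" "g (sV k a) = sV k (g a)" for a c k
      using lg unfolding Vector_Spaces.linear_iff by blast+
    have sym2: "b (g u) v = b u (x v)" for u v
      using th(2)[of "g u" v] th(2)[of u "x v"] gb[of v u] by simp
    show ?thesis unfolding adj
    proof (rule main[OF vs fin _ _ _ bR0 bL0 assms(9)])
      show "x (a + c) + g (a + c) = (x a + g a) + (x c + g c)" for a c
        by (simp add: xadd gadd algebra_simps)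
      show "x (sV k a) + g (sV k a) = sV k (x a + g a)" for k a
        by (simp add: xadd gadd scale_right_distrib)
      show "b (x u + g u) v = b u (x v + g v)" for u v
        by (simp add: bL bR gb sym2 add.commute)
    qed
  qed
  have S: "invertible_or_nilpotent x" if xS: "x \<in> Sym sV b" for x
  proof -
    from xS have lx: "Vector_Spaces.linear sV sV x" and sx: "\<And>u v. b (x u) v = b u (x v)"
      unfolding Sym_def by auto
    have xadd: "x (a + c) = x a + x c" "x (sV k a) = sV k (x a)" for a c k
      using lx unfolding Vector_Spaces.linear_iff by blast+
    show ?thesis by (rule main[OF vs fin xadd sx bR0 bL0 assms(9)])
  qed
  show ?thesis using A S by blast
qed


end
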